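(* Let $n\ge1$ and let $\mathcal{LF}_2:S_n\to\mathbb{N}$ be the Lehmer factorial norm. Then: (i) $\mathcal{LF}_2(e_n)=0$ is the minimal value, and $e_n$ is the only permutation attaining it. (ii) $\mathcal{LF}_2(\bar e_n)=2^n-(n+1)$ is the maximal value, and $\bar e_n$ is the only permutation attaining it. (iii) For $s=1,\dots,n-1$, $\mathcal{LF}_2(\sigma_s)=2^{n-1-s}$; hence $\mathcal{LF}_2(\sigma_1)>\mathcal{LF}_2(\sigma_2)>\dots>\mathcal{LF}_2(\sigma_{n-1})$. (iv) The inclusion $\iota_n:S_n\to S_{n+1}$, $\iota_n(\sigma)=(1,\sigma(1)+1,\sigma(2)+1,\dots,\sigma(n)+1)$, satisfies $\mathcal{LF}_2(\iota_n(\sigma))=\mathcal{LF}_2(\sigma)$ for all $\sigma\in S_n$. (v) $\mathcal{LF}_2(\sigma)=\mathcal{LF}_2(\sigma^{-1})$ for all $\sigma\in S_n$. (vi) $\mathcal{LF}_2(\sigma\tau)\le\mathcal{LF}_2(\sigma)+\mathcal{LF}_2(\tau)$ for all $\sigma,\tau\in S_n$. (vii) For $\sigma\in S_n$, $s\in\{1,\dots,n-1\}$ and $\tau=\sigma\sigma_s$, $$|\mathcal{LF}_2(\tau)-\mathcal{LF}_2(\sigma)|=2^{-\min\{c_s(\sigma),c_{s+1}(\sigma)\}}\,\mathcal{LF}_2(\sigma_s).$$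
   Context: $[n]=\{1,\dots,n\}$, $S_n$ is the group of permutations of $[n]$, a permutation is written $\sigma=(\sigma(1),\dots,\sigma(n))$, composition is $(\sigma\tau)(i)=\sigma(\tau(i))$. $e_n=(1,2,\dots,n)$ is the identity and $\bar e_n=(n,n-1,\dots,1)$ its reverse. For $s=1,\dots,n-1$, $\sigma_s$ is the adjacent transposition swapping $s$ and $s+1$. For $\sigma\in S_n$ and $i\in[n]$, $c_i(\sigma)=|\{j\in[n]: j>i \text{ and } \sigma(j)<\sigma(i)\}|$ (Lehmer code entries), and $k_i(\sigma)=c_{n-i}(\sigma)$ for $i=0,\dots,n-1$. The Lehmer factorial norm (with base 2) is $\mathcal{LF}_2(\sigma)=\sum_{i=0}^{n-1}\left[2^i-2^{i-k_i(\sigma)}\right]$. *)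

theory Defs
  imports Complex_Main "HOL-Combinatorics.Combinatorics"
begin

text \<open>Permutations of [n] are functions nat => nat with sigma permutes {1..n}
  (fixed outside {1..n}). Composition is function composition.\<close>

definition lehmer_c :: "nat \<Rightarrow> (nat \<Rightarrow> nat) \<Rightarrow> nat \<Rightarrow> nat" where
  "lehmer_c n \<sigma> i = card {j \<in> {1..n}. j > i \<and> \<sigma> j < \<sigma> i}"

definition lehmer_k :: "nat \<Rightarrow> (nat \<Rightarrow> nat) \<Rightarrow> nat \<Rightarrow> nat" where
  "lehmer_k n \<sigma> i = lehmer_c n \<sigma> (n - i)"

text \<open>Lehmer factorial norm with base 2; note k_i <= i, so every summand is a
  nonnegative natural number and the natural-number subtractions are exact.\<close>
definition LF2 :: "nat \<Rightarrow> (nat \<Rightarrow> nat) \<Rightarrow> nat" where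
  "LF2 n \<sigma> = (\<Sum>i<n. 2 ^ i - 2 ^ (i - lehmer_k n \<sigma> i))"

definition rev_perm :: "nat \<Rightarrow> nat \<Rightarrow> nat" where
  "rev_perm n = (\<lambda>i. if i \<in> {1..n} then n + 1 - i else i)"

definition adj_transp :: "nat \<Rightarrow> nat \<Rightarrow> nat" where
  "adj_transp s = Transposition.transpose s (s + 1)"

definition iota_incl :: "nat \<Rightarrow> (nat \<Rightarrow> nat) \<Rightarrow> nat \<Rightarrow> nat" where
  "iota_incl n \<sigma> = (\<lambda>i. if i = 1 then 1 else if i \<in> {2..n+1} then \<sigma> (i - 1) + 1 else i)"

end

theory Submission
  imports Defs "HOL-Combinatorics.Combinatorics"
begin


definition bad :: "nat \<Rightarrow> (nat \<Rightarrow> nat) \<Rightarrow> nat set set" where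
  "bad n \<sigma> = {S. S \<subseteq> {1..n} \<and> S \<noteq> {} \<and> \<sigma> (Min S) \<noteq> Min (\<sigma> ` S)}"

lemma finite_bad: "finite (bad n \<sigma>)"
  by (rule finite_subset[of _ "Pow {1..n}"]) (auto simp: bad_def)

definition Lset :: "nat \<Rightarrow> (nat \<Rightarrow> nat) \<Rightarrow> nat \<Rightarrow> nat set" where
  "Lset n \<sigma> p = {j \<in> {1..n}. j > p \<and> \<sigma> j < \<sigma> p}"

lemma c_Lset: "lehmer_c n \<sigma> p = card (Lset n \<sigma> p)"
  by (simp add: lehmer_c_def Lset_def)

lemma Lset_sub: "p \<ge> 1 \<Longrightarrow> Lset n \<sigma> p \<subseteq> {p<..n}"
  by (auto simp: Lset_def)

lemma c_le: "lehmer_c n \<sigma> p \<le> n - p"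
proof -
  have "Lset n \<sigma> p \<subseteq> {p<..n}" by (auto simp: Lset_def)
  then have "card (Lset n \<sigma> p) \<le> card {p<..n}" by (intro card_mono) auto
  then show ?thesis by (simp add: c_Lset)
qed

lemma bad_fiber:
  assumes p: "p \<in> {1..n}"
  shows "card {S \<in> bad n \<sigma>. Min S = p} = 2 ^ (n - p) - 2 ^ (n - p - lehmer_c n \<sigma> p)"
proof -
  define X where "X = {p<..n}"
  define L where "L = Lset n \<sigma> p"
  have LX: "L \<subseteq> X" using p by (auto simp: L_def X_def Lset_def)
  have fX: "finite X" by (simp add: X_def)
  have eq: "{T. T \<subseteq> X \<and> T \<inter> L \<noteq> {}} = Pow X - Pow (X - L)" by auto
  have c1: "card {T. T \<subseteq> X \<and> T \<inter> L \<noteq> {}} = 2 ^ (n - p) - 2 ^ (n - p - lehmer_c n \<sigma> p)"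
  proof -
    have "card (Pow X - Pow (X - L)) = card (Pow X) - card (Pow (X - L))"
      by (rule card_Diff_subset) (use fX in auto)
    also have "card (Pow X) = 2 ^ (n - p)" using fX by (simp add: card_Pow X_def)
    also have "card (Pow (X - L)) = 2 ^ (card X - card L)"
      using fX LX by (simp add: card_Pow card_Diff_subset finite_subset)
    finally show ?thesis using eq by (simp add: X_def L_def c_Lset)
  qed
  have bij: "bij_betw (\<lambda>T. insert p T) {T. T \<subseteq> X \<and> T \<inter> L \<noteq> {}} {S \<in> bad n \<sigma>. Min S = p}"
  proof (rule bij_betw_byWitness[where f' = "\<lambda>S. S - {p}"])
    show "\<forall>a\<in>{T. T \<subseteq> X \<and> T \<inter> L \<noteq> {}}. insert p a - {p} = a"
      by (auto simp: X_def)
    show "\<forall>S\<in>{S \<in> bad n \<sigma>. Min S = p}. insert p (S - {p}) = S"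
      by (auto simp: bad_def intro!: Min_in finite_subset[of _ "{1..n}"])
    show "(\<lambda>T. insert p T) ` {T. T \<subseteq> X \<and> T \<inter> L \<noteq> {}} \<subseteq> {S \<in> bad n \<sigma>. Min S = p}"
    proof (intro subsetI)
      fix S assume "S \<in> (\<lambda>T. insert p T) ` {T. T \<subseteq> X \<and> T \<inter> L \<noteq> {}}"
      then obtain T where T: "T \<subseteq> X" "T \<inter> L \<noteq> {}" and ST: "S = insert p T" by auto
      have fT: "finite T" using T fX finite_subset by blast
      have minp: "Min (insert p T) = p"
        using T p by (intro Min_eqI) (auto simp: X_def fT)
      obtain j where j: "j \<in> T" "j \<in> L" using T by auto
      have "Min (\<sigma> ` insert p T) \<le> \<sigma> j" using j fT by (intro Min_le) auto
      also have "\<sigma> j < \<sigma> p" using j by (simp add: L_def Lset_def)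
      finally have "Min (\<sigma> ` insert p T) \<noteq> \<sigma> p" by simp
      then have "insert p T \<in> bad n \<sigma>" using T p minp by (auto simp: bad_def X_def)
      then show "S \<in> {S \<in> bad n \<sigma>. Min S = p}" using minp ST by simp
    qed
    show "(\<lambda>S. S - {p}) ` {S \<in> bad n \<sigma>. Min S = p} \<subseteq> {T. T \<subseteq> X \<and> T \<inter> L \<noteq> {}}"
    proof (intro subsetI)
      fix U assume "U \<in> (\<lambda>S. S - {p}) ` {S \<in> bad n \<sigma>. Min S = p}"
      then obtain S where S: "S \<in> bad n \<sigma>" "p = Min S" and US: "U = S - {p}" by auto
      have fS: "finite S" and Sn: "S \<subseteq> {1..n}" and ne: "S \<noteq> {}" and nm: "\<sigma> (Min S) \<noteq> Min (\<sigma> ` S)"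
        using S(1) by (auto simp: bad_def intro: finite_subset)
      have pS: "p \<in> S" using S fS ne by auto
      have "Min (\<sigma> ` S) \<in> \<sigma> ` S" using fS ne by (intro Min_in) auto
      then obtain j where j: "j \<in> S" "\<sigma> j = Min (\<sigma> ` S)" by auto
      have le: "\<sigma> j \<le> \<sigma> p" using j pS fS by (simp add: )
      have jp: "j \<noteq> p" using j nm S by auto
      have jgt: "j > p" using j jp fS S(2) by (metis Min_le order_le_neq_trans)
      have "x \<in> X" if "x \<in> S - {p}" for x
        using that S(2) fS Sn by (auto simp: X_def) (metis Min_le le_neq_implies_less)
      moreover have "(S - {p}) \<inter> L \<noteq> {}"
      proof -
        have "\<sigma> j < \<sigma> p" using le j nm S(2) by auto
        then have "j \<in> L" using j jgt Sn by (auto simp: L_def Lset_def)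
        then show ?thesis using j jp by auto
      qed
      ultimately show "U \<in> {T. T \<subseteq> X \<and> T \<inter> L \<noteq> {}}" using US by auto
    qed
  qed
  show ?thesis using bij_betw_same_card[OF bij] c1 by simp
qed

lemma LF2_bad: "LF2 n \<sigma> = card (bad n \<sigma>)"
proof -
  have "card (bad n \<sigma>) = (\<Sum>p\<in>{1..n}. card {S \<in> bad n \<sigma>. Min S = p})"
  proof -
    have "bad n \<sigma> = (\<Union>p\<in>{1..n}. {S \<in> bad n \<sigma>. Min S = p})"
    proof safe
      fix S assume S: "S \<in> bad n \<sigma>"
      then have "Min S \<in> S" "S \<subseteq> {1..n}" by (auto simp: bad_def intro!: Min_in finite_subset[of S "{1..n}"])
      then show "S \<in> (\<Union>p\<in>{1..n}. {S \<in> bad n \<sigma>. Min S = p})" using S by auto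
    qed
    then have "card (bad n \<sigma>) = card (\<Union>p\<in>{1..n}. {S \<in> bad n \<sigma>. Min S = p})" by simp
    also have "\<dots> = (\<Sum>p\<in>{1..n}. card {S \<in> bad n \<sigma>. Min S = p})"
      by (rule card_UN_disjoint) (auto intro: finite_subset[OF _ finite_bad])
    finally show ?thesis .
  qed
  also have "\<dots> = (\<Sum>p\<in>{1..n}. 2 ^ (n - p) - 2 ^ (n - p - lehmer_c n \<sigma> p))"
    by (rule sum.cong) (auto simp: bad_fiber)
  also have "\<dots> = (\<Sum>i<n. 2 ^ i - 2 ^ (i - lehmer_k n \<sigma> i))"
    unfolding lehmer_k_def
    by (rule sum.reindex_bij_witness[where i = "\<lambda>i. n - i" and j = "\<lambda>p. n - p"]) auto
  finally show ?thesis by (simp add: LF2_def)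
qed



lemma bad_inv_le:
  assumes "\<sigma> permutes {1..n}"
  shows "card (bad n \<sigma>) \<le> card (bad n (inv \<sigma>))"
proof (rule card_inj_on_le[OF _ _ finite_bad])
  have inj: "inj \<sigma>" using assms permutes_inj by blast
  show "inj_on (image \<sigma>) (bad n \<sigma>)"
    using inj by (auto simp: inj_on_def inj_image_eq_iff)
  show "image \<sigma> ` bad n \<sigma> \<subseteq> bad n (inv \<sigma>)"
  proof safe
    fix S assume S: "S \<in> bad n \<sigma>"
    have Sn: "S \<subseteq> {1..n}" and ne: "S \<noteq> {}" and nm: "\<sigma> (Min S) \<noteq> Min (\<sigma> ` S)"
      using S by (auto simp: bad_def)
    have "\<sigma> ` S \<subseteq> {1..n}" using Sn assms permutes_image by blast
    moreover have "inv \<sigma> ` \<sigma> ` S = S" using inj by (simp add: image_comp inv_o_cancel)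
    moreover have "inv \<sigma> (Min (\<sigma> ` S)) \<noteq> Min S"
    proof
      assume "inv \<sigma> (Min (\<sigma> ` S)) = Min S"
      then have "\<sigma> (inv \<sigma> (Min (\<sigma> ` S))) = \<sigma> (Min S)" by simp
      then show False using nm assms by (simp add: permutes_inverses(1))
    qed
    ultimately show "\<sigma> ` S \<in> bad n (inv \<sigma>)" using ne by (auto simp: bad_def)
  qed
qed

lemma LF2_inv:
  assumes "\<sigma> permutes {1..n}"
  shows "LF2 n \<sigma> = LF2 n (inv \<sigma>)"
proof -
  have "inv \<sigma> permutes {1..n}" using assms by (rule permutes_inv)
  then have "card (bad n (inv \<sigma>)) \<le> card (bad n (inv (inv \<sigma>)))" by (rule bad_inv_le)
  also have "inv (inv \<sigma>) = \<sigma>" using assms by (simp add: permutes_inv_inv)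
  finally show ?thesis using bad_inv_le[OF assms] by (simp add: LF2_bad)
qed

lemma LF2_comp:
  assumes s: "\<sigma> permutes {1..n}" and t: "\<tau> permutes {1..n}"
  shows "LF2 n (\<sigma> \<circ> \<tau>) \<le> LF2 n \<sigma> + LF2 n \<tau>"
proof -
  have inj: "inj \<tau>" using t permutes_inj by blast
  have sub: "bad n (\<sigma> \<circ> \<tau>) \<subseteq> bad n \<tau> \<union> image (inv \<tau>) ` bad n \<sigma>"
  proof
    fix S assume S: "S \<in> bad n (\<sigma> \<circ> \<tau>)"
    have Sn: "S \<subseteq> {1..n}" and ne: "S \<noteq> {}" and nm: "\<sigma> (\<tau> (Min S)) \<noteq> Min (\<sigma> ` \<tau> ` S)"
      using S by (auto simp: bad_def image_comp)
    show "S \<in> bad n \<tau> \<union> image (inv \<tau>) ` bad n \<sigma>"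
    proof (cases "S \<in> bad n \<tau>")
      case False
      then have eq: "\<tau> (Min S) = Min (\<tau> ` S)" using Sn ne by (auto simp: bad_def)
      have "\<tau> ` S \<subseteq> {1..n}" using Sn t permutes_image by blast
      then have "\<tau> ` S \<in> bad n \<sigma>" using ne nm eq by (auto simp: bad_def)
      moreover have "inv \<tau> ` \<tau> ` S = S" using inj by (simp add: image_comp inv_o_cancel)
      ultimately show ?thesis by (metis UnI2 image_eqI)
    qed simp
  qed
  have "card (bad n (\<sigma> \<circ> \<tau>)) \<le> card (bad n \<tau> \<union> image (inv \<tau>) ` bad n \<sigma>)"
    by (rule card_mono[OF _ sub]) (simp add: finite_bad)
  also have "\<dots> \<le> card (bad n \<tau>) + card (image (inv \<tau>) ` bad n \<sigma>)" by (rule card_Un_le)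
  also have "card (image (inv \<tau>) ` bad n \<sigma>) \<le> card (bad n \<sigma>)" by (rule card_image_le[OF finite_bad])
  finally show ?thesis by (simp add: LF2_bad)
qed



lemma LF2_alt: "LF2 n \<sigma> = (\<Sum>p\<in>{1..n}. 2 ^ (n - p) - 2 ^ (n - p - lehmer_c n \<sigma> p))"
  unfolding LF2_def lehmer_k_def
  by (rule sum.reindex_bij_witness[where i = "\<lambda>p. n - p" and j = "\<lambda>i. n - i"]) auto

lemma card_below:
  assumes s: "\<sigma> permutes {1..n}" and i: "i \<in> {1..n}"
  shows "card {j \<in> {1..n}. \<sigma> j < \<sigma> i} = \<sigma> i - 1"
proof -
  have inj: "inj \<sigma>" using s permutes_inj by blast
  have im: "\<sigma> ` {1..n} = {1..n}" using s permutes_image by blast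
  have si: "\<sigma> i \<in> {1..n}" using i im by blast
  have "\<sigma> ` {j \<in> {1..n}. \<sigma> j < \<sigma> i} = {v \<in> \<sigma> ` {1..n}. v < \<sigma> i}" by auto
  also have "\<dots> = {1..<\<sigma> i}" using im si by auto
  finally have "card {j \<in> {1..n}. \<sigma> j < \<sigma> i} = card {1..<\<sigma> i}"
    using card_image[of \<sigma>] inj by (metis (no_types, lifting) inj_on_subset subset_UNIV)
  then show ?thesis by simp
qed

lemma perm_eq_from_below:
  assumes s: "\<sigma> permutes {1..n}" and f: "\<And>i. i \<in> {1..n} \<Longrightarrow> \<sigma> i = f i"
    and out: "\<And>i. i \<notin> {1..n} \<Longrightarrow> f i = i"
  shows "\<sigma> = f"
proof (rule ext)
  fix x show "\<sigma> x = f x"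
    using s f out by (cases "x \<in> {1..n}") (auto simp: permutes_not_in)
qed

lemma part_i:
  assumes s: "\<sigma> permutes {1..n}" and z: "LF2 n \<sigma> = 0"
  shows "\<sigma> = id"
proof -
  have inj: "inj \<sigma>" using s permutes_inj by blast
  have bad0: "bad n \<sigma> = {}" using z finite_bad by (simp add: LF2_bad)
  have mono: "\<sigma> i < \<sigma> j" if "i \<in> {1..n}" "j \<in> {1..n}" "i < j" for i j
  proof -
    have "{i, j} \<notin> bad n \<sigma>" using bad0 by simp
    then have "\<sigma> (Min {i, j}) = Min (\<sigma> ` {i, j})" using that by (auto simp: bad_def)
    then have "\<sigma> i \<le> \<sigma> j" using that by (auto simp: min_def split: if_splits)
    moreover have "\<sigma> i \<noteq> \<sigma> j" using inj that by (auto dest: injD)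
    ultimately show ?thesis by simp
  qed
  have "\<sigma> i = i" if i: "i \<in> {1..n}" for i
  proof -
    have "{j \<in> {1..n}. \<sigma> j < \<sigma> i} = {1..<i}"
    proof (rule set_eqI, rule iffI)
      fix j assume "j \<in> {j \<in> {1..n}. \<sigma> j < \<sigma> i}"
      then have j: "j \<in> {1..n}" "\<sigma> j < \<sigma> i" by auto
      have "j < i"
      proof (rule ccontr)
        assume "\<not> j < i"
        then have "i = j \<or> i < j" by auto
        then show False using mono[OF i j(1)] j by auto
      qed
      then show "j \<in> {1..<i}" using j by auto
    next
      fix j assume "j \<in> {1..<i}" then show "j \<in> {j \<in> {1..n}. \<sigma> j < \<sigma> i}" using i mono by auto
    qed
    then have "\<sigma> i - 1 = i - 1" using card_below[OF s i] by simp
    moreover have "\<sigma> i \<ge> 1" using s i permutes_in_image by fastforce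
    moreover have "1 \<le> i" using i by simp
    ultimately show ?thesis by linarith
  qed
  then show ?thesis by (intro perm_eq_from_below[OF s]) auto
qed

lemma LF2_id: "LF2 n id = 0"
proof -
  have "lehmer_c n id p = 0" for p by (simp add: lehmer_c_def)
  then show ?thesis by (simp add: LF2_alt)
qed

lemma geom_nat: "(\<Sum>i<n. (2::nat) ^ i - 1) = 2 ^ n - (n + 1)"
proof (induction n)
  case (Suc n)
  have "(1::nat) \<le> 2 ^ n" by simp
  moreover have "n + 1 \<le> 2 ^ n" by (induction n) auto
  ultimately show ?case using Suc by simp
qed simp

lemma term_le: "(2::nat) ^ i - 2 ^ (i - k) \<le> 2 ^ i - 1"
  by (simp add: diff_le_mono2)

lemma LF2_le: "LF2 n \<sigma> \<le> 2 ^ n - (n + 1)"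
  unfolding LF2_def geom_nat[symmetric] by (rule sum_mono) (rule term_le)

lemma c_rev: "p \<in> {1..n} \<Longrightarrow> lehmer_c n (rev_perm n) p = n - p"
proof -
  assume p: "p \<in> {1..n}"
  have "{j \<in> {1..n}. j > p \<and> rev_perm n j < rev_perm n p} = {p<..n}"
    using p by (auto simp: rev_perm_def)
  then show ?thesis by (simp add: lehmer_c_def)
qed

lemma LF2_rev: "LF2 n (rev_perm n) = 2 ^ n - (n + 1)"
proof -
  have "LF2 n (rev_perm n) = (\<Sum>i<n. 2 ^ i - 1)"
    unfolding LF2_def lehmer_k_def
    by (rule sum.cong) (auto simp: c_rev)
  then show ?thesis using geom_nat[of n] by simp
qed

lemma part_ii:
  assumes s: "\<sigma> permutes {1..n}" and m: "LF2 n \<sigma> = 2 ^ n - (n + 1)"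
  shows "\<sigma> = rev_perm n"
proof -
  have inj: "inj \<sigma>" using s permutes_inj by blast
  have all: "2 ^ i - 2 ^ (i - lehmer_k n \<sigma> i) = (2::nat) ^ i - 1" if i: "i < n" for i
  proof (rule ccontr)
    assume ne: "\<not> ?thesis"
    have "LF2 n \<sigma> < (\<Sum>i<n. (2::nat) ^ i - 1)"
      unfolding LF2_def
    proof (rule sum_strict_mono_ex1)
      show "\<forall>x\<in>{..<n}. 2 ^ x - 2 ^ (x - lehmer_k n \<sigma> x) \<le> (2::nat) ^ x - 1"
        using term_le by blast
      show "\<exists>x\<in>{..<n}. 2 ^ x - 2 ^ (x - lehmer_k n \<sigma> x) < (2::nat) ^ x - 1"
        using i ne term_le[of i "lehmer_k n \<sigma> i"] by (intro bexI[of _ i]) auto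
    qed simp
    then show False using m geom_nat by simp
  qed
  have cfull: "lehmer_c n \<sigma> p = n - p" if p: "p \<in> {1..n}" for p
  proof -
    have "2 ^ (n - p) - 2 ^ (n - p - lehmer_c n \<sigma> p) = (2::nat) ^ (n - p) - 1"
      using all[of "n - p"] p by (simp add: lehmer_k_def)
    moreover have "(2::nat) ^ (n - p - lehmer_c n \<sigma> p) \<le> 2 ^ (n - p)"
      by (intro power_increasing) auto
    moreover have "(1::nat) \<le> 2 ^ (n - p - lehmer_c n \<sigma> p)" by simp
    ultimately have "(2::nat) ^ (n - p - lehmer_c n \<sigma> p) = 1" by linarith
    then have "n - p \<le> lehmer_c n \<sigma> p" by simp
    then show ?thesis using c_le[of n \<sigma> p] by simp
  qed
  have dec: "\<sigma> j < \<sigma> p" if "p \<in> {1..n}" "j \<in> {1..n}" "p < j" for p j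
  proof -
    have "Lset n \<sigma> p \<subseteq> {p<..n}" by (auto simp: Lset_def)
    moreover have "card (Lset n \<sigma> p) = card {p<..n}" using cfull[OF that(1)] by (simp add: c_Lset)
    ultimately have "Lset n \<sigma> p = {p<..n}" by (intro card_subset_eq) auto
    moreover have "j \<in> {p<..n}" using that by simp
    ultimately have "j \<in> Lset n \<sigma> p" by blast
    then show ?thesis by (simp add: Lset_def)
  qed
  have "\<sigma> i = n + 1 - i" if i: "i \<in> {1..n}" for i
  proof -
    have "{j \<in> {1..n}. \<sigma> j < \<sigma> i} = {i<..n}"
    proof (rule set_eqI, rule iffI)
      fix j assume "j \<in> {j \<in> {1..n}. \<sigma> j < \<sigma> i}"
      then have j: "j \<in> {1..n}" "\<sigma> j < \<sigma> i" by auto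
      have "i < j"
      proof (rule ccontr)
        assume "\<not> i < j"
        then have "i = j \<or> j < i" by auto
        then show False using dec[OF j(1) i] j by auto
      qed
      then show "j \<in> {i<..n}" using j by auto
    next
      fix j assume "j \<in> {i<..n}" then show "j \<in> {j \<in> {1..n}. \<sigma> j < \<sigma> i}" using i dec by auto
    qed
    then have "\<sigma> i - 1 = n - i" using card_below[OF s i] by simp
    moreover have "\<sigma> i \<ge> 1" using s i permutes_in_image by fastforce
    ultimately show ?thesis using i by auto
  qed
  then show ?thesis by (intro perm_eq_from_below[OF s]) (auto simp: rev_perm_def)
qed



lemma c_adj:
  assumes "s \<in> {1..n-1}"
  shows "lehmer_c n (adj_transp s) p = (if p = s then 1 else 0)"
proof -
  have "{j \<in> {1..n}. j > p \<and> adj_transp s j < adj_transp s p} = (if p = s then {s+1} else {})"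
    using assms by (auto simp: adj_transp_def Transposition.transpose_def split: if_splits)
  then show ?thesis by (simp add: lehmer_c_def)
qed

lemma LF2_adj:
  assumes s: "s \<in> {1..n-1}"
  shows "LF2 n (adj_transp s) = 2 ^ (n - 1 - s)"
proof -
  have "LF2 n (adj_transp s) = (\<Sum>p\<in>{1..n}. if p = s then 2 ^ (n - s) - 2 ^ (n - s - 1) else 0)"
    unfolding LF2_alt by (rule sum.cong) (auto simp: c_adj[OF s])
  also have "\<dots> = 2 ^ (n - s) - 2 ^ (n - s - 1)" using s by simp
  also have "\<dots> = 2 ^ (n - 1 - s)"
  proof -
    have "n - s = Suc (n - 1 - s)" using s by auto
    then show ?thesis by simp
  qed
  finally show ?thesis .
qed

lemma c_iota_1: "lehmer_c (n + 1) (iota_incl n \<sigma>) 1 = 0"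
  by (simp add: lehmer_c_def iota_incl_def)

lemma c_iota:
  assumes q: "q \<in> {1..n}"
  shows "lehmer_c (n + 1) (iota_incl n \<sigma>) (q + 1) = lehmer_c n \<sigma> q"
proof -
  have "{j \<in> {1..n+1}. j > q + 1 \<and> iota_incl n \<sigma> j < iota_incl n \<sigma> (q + 1)}
        = Suc ` {j \<in> {1..n}. j > q \<and> \<sigma> j < \<sigma> q}"
  proof (rule set_eqI, rule iffI)
    fix x assume x: "x \<in> {j \<in> {1..n+1}. j > q + 1 \<and> iota_incl n \<sigma> j < iota_incl n \<sigma> (q + 1)}"
    then have "x - 1 \<in> {j \<in> {1..n}. j > q \<and> \<sigma> j < \<sigma> q}" "x = Suc (x - 1)"
      using q by (auto simp: iota_incl_def split: if_splits)
    then show "x \<in> Suc ` {j \<in> {1..n}. j > q \<and> \<sigma> j < \<sigma> q}" by (metis image_eqI)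
  next
    fix x assume "x \<in> Suc ` {j \<in> {1..n}. j > q \<and> \<sigma> j < \<sigma> q}"
    then obtain y where "y \<in> {j \<in> {1..n}. j > q \<and> \<sigma> j < \<sigma> q}" "x = Suc y" by auto
    then show "x \<in> {j \<in> {1..n+1}. j > q + 1 \<and> iota_incl n \<sigma> j < iota_incl n \<sigma> (q + 1)}"
      using q by (auto simp: iota_incl_def)
  qed
  then show ?thesis by (simp add: lehmer_c_def card_image)
qed

lemma LF2_iota: "LF2 (n + 1) (iota_incl n \<sigma>) = LF2 n \<sigma>"
proof -
  have "LF2 (n + 1) (iota_incl n \<sigma>) = (\<Sum>i<n. 2 ^ i - 2 ^ (i - lehmer_k (n+1) (iota_incl n \<sigma>) i))
          + (2 ^ n - 2 ^ (n - lehmer_k (n+1) (iota_incl n \<sigma>) n))"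
    by (simp add: LF2_def)
  also have "lehmer_k (n+1) (iota_incl n \<sigma>) n = 0" using c_iota_1[of n \<sigma>] by (simp add: lehmer_k_def)
  also have "(\<Sum>i<n. 2 ^ i - 2 ^ (i - lehmer_k (n+1) (iota_incl n \<sigma>) i)) = LF2 n \<sigma>"
    unfolding LF2_def
  proof (rule sum.cong)
    fix i assume i: "i \<in> {..<n}"
    then have "n + 1 - i = (n - i) + 1" "n - i \<in> {1..n}" by auto
    then have "lehmer_k (n+1) (iota_incl n \<sigma>) i = lehmer_k n \<sigma> i"
      using c_iota[of "n - i" n \<sigma>] by (simp add: lehmer_k_def)
    then show "2 ^ i - 2 ^ (i - lehmer_k (n+1) (iota_incl n \<sigma>) i) = 2 ^ i - 2 ^ (i - lehmer_k n \<sigma> i)" by simp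
  qed simp
  finally show ?thesis by simp
qed



lemma t_simps:
  "adj_transp s s = s + 1" "adj_transp s (s + 1) = s" "adj_transp s (Suc s) = s"
  "x \<noteq> s \<Longrightarrow> x \<noteq> s + 1 \<Longrightarrow> adj_transp s x = x"
  by (auto simp: adj_transp_def)

lemma t_if: "adj_transp s x = (if x = s then s + 1 else if x = s + 1 then s else x)"
  by (simp add: adj_transp_def Transposition.transpose_def)

lemma t_invol: "adj_transp s (adj_transp s x) = x"
  by (simp add: adj_transp_def)

context
  fixes n s :: nat and \<sigma> :: "nat \<Rightarrow> nat"
  assumes sig: "\<sigma> permutes {1..n}" and s: "s \<in> {1..n-1}"
begin

definition "AA = card {j \<in> {1..n}. j > s + 1 \<and> \<sigma> j < \<sigma> s}"
definition "BB = card {j \<in> {1..n}. j > s + 1 \<and> \<sigma> j < \<sigma> (s + 1)}"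

lemma neq: "\<sigma> s \<noteq> \<sigma> (s + 1)"
proof
  assume "\<sigma> s = \<sigma> (s + 1)"
  then have "s = s + 1" using permutes_inj[OF sig] by (auto dest: injD)
  then show False by simp
qed

lemma cs_sigma: "lehmer_c n \<sigma> s = AA + (if \<sigma> (s + 1) < \<sigma> s then 1 else 0)"
proof -
  have eq: "{j \<in> {1..n}. j > s \<and> \<sigma> j < \<sigma> s} =
      {j \<in> {1..n}. j > s + 1 \<and> \<sigma> j < \<sigma> s} \<union> (if \<sigma> (s + 1) < \<sigma> s then {s + 1} else {})"
    using s by (auto split: if_splits) (metis Suc_lessI)
  show ?thesis unfolding lehmer_c_def eq AA_def
    by (subst card_Un_disjoint) auto
qed

lemma cs1_sigma: "lehmer_c n \<sigma> (s + 1) = BB"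
  by (simp add: lehmer_c_def BB_def)

lemma cs_tau: "lehmer_c n (\<sigma> \<circ> adj_transp s) s = BB + (if \<sigma> s < \<sigma> (s + 1) then 1 else 0)"
proof -
  have eq: "{j \<in> {1..n}. j > s \<and> (\<sigma> \<circ> adj_transp s) j < (\<sigma> \<circ> adj_transp s) s} =
      {j \<in> {1..n}. j > s + 1 \<and> \<sigma> j < \<sigma> (s + 1)} \<union> (if \<sigma> s < \<sigma> (s + 1) then {s + 1} else {})"
    using s by (auto simp: t_if split: if_splits)
  show ?thesis unfolding lehmer_c_def eq BB_def
    by (subst card_Un_disjoint) auto
qed

lemma cs1_tau: "lehmer_c n (\<sigma> \<circ> adj_transp s) (s + 1) = AA"
proof -
  have eq: "{j \<in> {1..n}. j > s + 1 \<and> (\<sigma> \<circ> adj_transp s) j < (\<sigma> \<circ> adj_transp s) (s + 1)} =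
      {j \<in> {1..n}. j > s + 1 \<and> \<sigma> j < \<sigma> s}"
    by (auto simp: t_if)
  show ?thesis unfolding lehmer_c_def eq AA_def ..
qed

lemma cp_tau:
  assumes p: "p \<noteq> s" "p \<noteq> s + 1"
  shows "lehmer_c n (\<sigma> \<circ> adj_transp s) p = lehmer_c n \<sigma> p"
proof -
  have tp: "adj_transp s p = p" using p by (simp add: t_simps)
  have key: "j \<in> Lset n (\<sigma> \<circ> adj_transp s) p \<longleftrightarrow> adj_transp s j \<in> Lset n \<sigma> p" for j
    using s p by (cases "j = s \<or> j = s + 1") (auto simp: Lset_def t_simps tp)
  have "bij_betw (adj_transp s) (Lset n (\<sigma> \<circ> adj_transp s) p) (Lset n \<sigma> p)"
    by (rule bij_betw_byWitness[where f' = "adj_transp s"])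
       (auto simp: key t_invol)
  then show ?thesis by (simp add: c_Lset bij_betw_same_card)
qed

lemma real_g: "real ((2::nat) ^ i - 2 ^ (i - k)) = 2 ^ i - 2 ^ (i - k)"
proof -
  have "(2::nat) ^ (i - k) \<le> 2 ^ i" by (intro power_increasing) auto
  then show ?thesis by (simp add: of_nat_diff)
qed

lemma split_sum:
  fixes f :: "nat \<Rightarrow> nat"
  shows "(\<Sum>p\<in>{1..n}. f p) = f s + f (s + 1) + (\<Sum>p\<in>{1..n} - {s} - {s + 1}. f p)"
proof -
  have "(\<Sum>p\<in>{1..n}. f p) = f s + (\<Sum>p\<in>{1..n} - {s}. f p)"
    using s by (intro sum.remove) auto
  also have "(\<Sum>p\<in>{1..n} - {s}. f p) = f (s + 1) + (\<Sum>p\<in>{1..n} - {s} - {s + 1}. f p)"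
    using s by (intro sum.remove) auto
  finally show ?thesis by simp
qed

lemma part_vii:
  "\<bar>real (LF2 n (\<sigma> \<circ> adj_transp s)) - real (LF2 n \<sigma>)\<bar>
     = real (LF2 n (adj_transp s)) / 2 ^ min (lehmer_c n \<sigma> s) (lehmer_c n \<sigma> (s + 1))"
proof -
  define m where "m = n - s - 1"
  have m1: "n - s = Suc m" "n - (s + 1) = m" using s by (auto simp: m_def)
  define R :: nat where "R = (\<Sum>p\<in>{1..n} - {s} - {s + 1}. 2 ^ (n - p) - 2 ^ (n - p - lehmer_c n \<sigma> p))"
  have Rt: "(\<Sum>p\<in>{1..n} - {s} - {s + 1}. 2 ^ (n - p) - 2 ^ (n - p - lehmer_c n (\<sigma> \<circ> adj_transp s) p)) = R"
    unfolding R_def by (rule sum.cong) (auto simp: cp_tau)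
  have LFs: "LF2 n \<sigma> = (2 ^ Suc m - 2 ^ (Suc m - lehmer_c n \<sigma> s)) + (2 ^ m - 2 ^ (m - BB)) + R"
  proof -
    have "LF2 n \<sigma> = (2 ^ (n - s) - 2 ^ (n - s - lehmer_c n \<sigma> s))
       + (2 ^ (n - (s + 1)) - 2 ^ (n - (s + 1) - lehmer_c n \<sigma> (s + 1))) + R"
      unfolding LF2_alt R_def by (rule split_sum)
    then show ?thesis by (simp only: m1 cs1_sigma)
  qed
  have LFt: "LF2 n (\<sigma> \<circ> adj_transp s) = (2 ^ Suc m - 2 ^ (Suc m - lehmer_c n (\<sigma> \<circ> adj_transp s) s)) + (2 ^ m - 2 ^ (m - AA)) + R"
  proof -
    have "LF2 n (\<sigma> \<circ> adj_transp s) = (2 ^ (n - s) - 2 ^ (n - s - lehmer_c n (\<sigma> \<circ> adj_transp s) s))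
       + (2 ^ (n - (s + 1)) - 2 ^ (n - (s + 1) - lehmer_c n (\<sigma> \<circ> adj_transp s) (s + 1))) + R"
      unfolding LF2_alt Rt[symmetric] by (rule split_sum)
    then show ?thesis by (simp only: m1 cs1_tau)
  qed
  have rLFs: "real (LF2 n \<sigma>) = (2 ^ Suc m - 2 ^ (Suc m - lehmer_c n \<sigma> s)) + (2 ^ m - 2 ^ (m - BB)) + real R"
    unfolding LFs by (simp only: of_nat_add real_g)
  have rLFt: "real (LF2 n (\<sigma> \<circ> adj_transp s)) = (2 ^ Suc m - 2 ^ (Suc m - lehmer_c n (\<sigma> \<circ> adj_transp s) s)) + (2 ^ m - 2 ^ (m - AA)) + real R"
    unfolding LFt by (simp only: of_nat_add real_g)
  have Am: "AA \<le> m" using c_le[of n "\<sigma> \<circ> adj_transp s" "s + 1"] unfolding cs1_tau m1(2) .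
  have Bm: "BB \<le> m" using c_le[of n \<sigma> "s + 1"] unfolding cs1_sigma m1(2) .
  have adj: "real (LF2 n (adj_transp s)) = 2 ^ m" using LF2_adj[OF s] by (simp add: m_def)
  have pd: "(2::real) ^ m / 2 ^ k = 2 ^ (m - k)" if "k \<le> m" for k
    using that by (simp add: power_diff)
  have sm: "(2::real) ^ (Suc m - k) = 2 * 2 ^ (m - k)" if "k \<le> m" for k
    using that by (simp add: Suc_diff_le)
  show ?thesis
  proof (cases "\<sigma> s < \<sigma> (s + 1)")
    case True
    have AB: "AA \<le> BB" unfolding AA_def BB_def
      by (rule card_mono) (use True in auto)
    have cs: "lehmer_c n \<sigma> s = AA" using True by (simp add: cs_sigma)
    have ct: "lehmer_c n (\<sigma> \<circ> adj_transp s) s = BB + 1" using True by (simp add: cs_tau)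
    have "real (LF2 n (\<sigma> \<circ> adj_transp s)) - real (LF2 n \<sigma>) = 2 ^ (m - AA)"
    proof -
      have e1: "Suc m - (BB + 1) = m - BB" by simp
      show ?thesis unfolding rLFs rLFt cs ct e1 sm[OF Am] by simp
    qed
    moreover have "real (LF2 n (adj_transp s)) / 2 ^ min (lehmer_c n \<sigma> s) (lehmer_c n \<sigma> (s + 1)) = 2 ^ (m - AA)"
      unfolding adj cs cs1_sigma using AB by (simp add: pd[OF Am] min_def)
    ultimately show ?thesis by simp
  next
    case False
    then have F: "\<sigma> (s + 1) < \<sigma> s" using neq by auto
    have AB: "BB \<le> AA" unfolding AA_def BB_def
      by (rule card_mono) (use F in auto)
    have cs: "lehmer_c n \<sigma> s = AA + 1" using F by (simp add: cs_sigma)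
    have ct: "lehmer_c n (\<sigma> \<circ> adj_transp s) s = BB" using F by (simp add: cs_tau)
    have "real (LF2 n (\<sigma> \<circ> adj_transp s)) - real (LF2 n \<sigma>) = - (2 ^ (m - BB))"
    proof -
      have e1: "Suc m - (AA + 1) = m - AA" by simp
      show ?thesis unfolding rLFs rLFt cs ct e1 sm[OF Bm] by simp
    qed
    moreover have "real (LF2 n (adj_transp s)) / 2 ^ min (lehmer_c n \<sigma> s) (lehmer_c n \<sigma> (s + 1)) = 2 ^ (m - BB)"
      unfolding adj cs cs1_sigma using AB by (simp add: pd[OF Bm] min_def)
    ultimately show ?thesis by simp
  qed
qed

end


theorem theorem3p6:
  fixes n :: nat
  assumes "n \<ge> 1"
  shows
   "(LF2 n id = 0 \<and> (\<forall>\<sigma>. \<sigma> permutes {1..n} \<longrightarrow> LF2 n id \<le> LF2 n \<sigma>)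
       \<and> (\<forall>\<sigma>. \<sigma> permutes {1..n} \<and> LF2 n \<sigma> = 0 \<longrightarrow> \<sigma> = id))
    \<and> (LF2 n (rev_perm n) = 2 ^ n - (n + 1)
       \<and> (\<forall>\<sigma>. \<sigma> permutes {1..n} \<longrightarrow> LF2 n \<sigma> \<le> LF2 n (rev_perm n))
       \<and> (\<forall>\<sigma>. \<sigma> permutes {1..n} \<and> LF2 n \<sigma> = 2 ^ n - (n + 1) \<longrightarrow> \<sigma> = rev_perm n))
    \<and> ((\<forall>s\<in>{1..n-1}. LF2 n (adj_transp s) = 2 ^ (n - 1 - s))
       \<and> (\<forall>s t. 1 \<le> s \<and> s < t \<and> t \<le> n - 1 \<longrightarrow> LF2 n (adj_transp s) > LF2 n (adj_transp t)))
    \<and> (\<forall>\<sigma>. \<sigma> permutes {1..n} \<longrightarrow> LF2 (n + 1) (iota_incl n \<sigma>) = LF2 n \<sigma>)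
    \<and> (\<forall>\<sigma>. \<sigma> permutes {1..n} \<longrightarrow> LF2 n \<sigma> = LF2 n (inv \<sigma>))
    \<and> (\<forall>\<sigma> \<tau>. \<sigma> permutes {1..n} \<and> \<tau> permutes {1..n} \<longrightarrow>
         LF2 n (\<sigma> \<circ> \<tau>) \<le> LF2 n \<sigma> + LF2 n \<tau>)
    \<and> (\<forall>\<sigma> s. \<sigma> permutes {1..n} \<and> s \<in> {1..n-1} \<longrightarrow>
         \<bar>real (LF2 n (\<sigma> \<circ> adj_transp s)) - real (LF2 n \<sigma>)\<bar>
           = real (LF2 n (adj_transp s)) / 2 ^ min (lehmer_c n \<sigma> s) (lehmer_c n \<sigma> (s + 1)))"
proof -
  have strict: "LF2 n (adj_transp s) > LF2 n (adj_transp t)"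
    if "1 \<le> s \<and> s < t \<and> t \<le> n - 1" for s t
  proof -
    have "s \<in> {1..n-1}" "t \<in> {1..n-1}" using that by auto
    then have "LF2 n (adj_transp s) = 2 ^ (n - 1 - s)" "LF2 n (adj_transp t) = 2 ^ (n - 1 - t)"
      by (auto simp: LF2_adj)
    moreover have "(2::nat) ^ (n - 1 - t) < 2 ^ (n - 1 - s)"
      using that by (intro power_strict_increasing) auto
    ultimately show ?thesis by simp
  qed
  show ?thesis
  proof (intro conjI allI impI ballI)
    show "LF2 n id = 0" by (rule LF2_id)
    show "LF2 n id \<le> LF2 n \<sigma>" for \<sigma> by (simp add: LF2_id)
    show "\<sigma> = id" if "\<sigma> permutes {1..n} \<and> LF2 n \<sigma> = 0" for \<sigma>
      using that part_i by blast
    show "LF2 n (rev_perm n) = 2 ^ n - (n + 1)" by (rule LF2_rev)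
    show "LF2 n \<sigma> \<le> LF2 n (rev_perm n)" for \<sigma> unfolding LF2_rev by (rule LF2_le)
    show "\<sigma> = rev_perm n" if "\<sigma> permutes {1..n} \<and> LF2 n \<sigma> = 2 ^ n - (n + 1)" for \<sigma>
      using that part_ii by blast
    show "LF2 n (adj_transp s) = 2 ^ (n - 1 - s)" if "s \<in> {1..n-1}" for s
      using that by (rule LF2_adj)
    show "LF2 n (adj_transp s) > LF2 n (adj_transp t)" if "1 \<le> s \<and> s < t \<and> t \<le> n - 1" for s t
      using that by (rule strict)
    show "LF2 (n + 1) (iota_incl n \<sigma>) = LF2 n \<sigma>" for \<sigma> by (rule LF2_iota)
    show "LF2 n \<sigma> = LF2 n (inv \<sigma>)" if "\<sigma> permutes {1..n}" for \<sigma>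
      using that by (rule LF2_inv)
    show "LF2 n (\<sigma> \<circ> \<tau>) \<le> LF2 n \<sigma> + LF2 n \<tau>"
      if "\<sigma> permutes {1..n} \<and> \<tau> permutes {1..n}" for \<sigma> \<tau>
      using that LF2_comp by blast
    show "\<bar>real (LF2 n (\<sigma> \<circ> adj_transp s)) - real (LF2 n \<sigma>)\<bar>
           = real (LF2 n (adj_transp s)) / 2 ^ min (lehmer_c n \<sigma> s) (lehmer_c n \<sigma> (s + 1))"
      if "\<sigma> permutes {1..n} \<and> s \<in> {1..n-1}" for \<sigma> s
      using that part_vii by blast
  qed
qed

end
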